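(* Let $\mathbb C$ be a pointed category with finite limits and finite colimits, and let $w\colon W\to A$, $x\colon X\to A$, $y\colon Y\to A$ be morphisms in $\mathbb C$. If $p\colon A_3\to A$ is an internal pregroupoid structure on the span $A/X \leftarrow A \rightarrow A/Y$, then $p\gamma_w\colon (W+X)\times_W(W+Y)\to A$ is an internal multiplication $X\times Y\to A$ over $(W,w)$.
   Context: Notation: $\iota_1,\iota_2,\dots$ denote coproduct injections, $[a,b]$ (resp. $[a,b,c]$) the morphism out of a coproduct with components $a,b$ (resp. $a,b,c$), $\langle a,b\rangle$ the morphism into a (fibred) product with components $a,b$, and $1$, $0$ identity and zero morphisms. $(W+X)\times_W(W+Y)$ denotes the pullback of $[1,0]\colon W+X\to W$ and $[1,0]\colon W+Y\to W$, with projections $\pi_1,\pi_2$. An internal multiplication $X\times Y\to A$ over $(W,w)$ is a morphism $m\colon (W+X)\times_W(W+Y)\to A$ with $m\langle 1,\iota_1[1,0]\rangle=[w,x]\colon W+X\to A$ and $m\langle \iota_1[1,0],1\rangle=[w,y]\colon W+Y\to A$. $A/X$ and $A/Y$ denote the codomains of $\mathsf{coker}(x)$ and $\mathsf{coker}(y)$, and $A_3=A\times_{A/X}A\times_{A/Y}A$ is the limit of $A\xrightarrow{\mathsf{coker}(x)}A/X\xleftarrow{\mathsf{coker}(x)}A\xrightarrow{\mathsf{coker}(y)}A/Y\xleftarrow{\mathsf{coker}(y)}A$, with three projections to $A$. $\gamma_w\colon (W+X)\times_W(W+Y)\to A_3$ is the morphism $\langle [w,x]\pi_1,[w,0]\pi_1,[w,y]\pi_2\rangle$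 (note $[w,0]\pi_1=[w,0]\pi_2$). An internal pregroupoid structure on the span $A/X\leftarrow A\to A/Y$ (the two legs being $\mathsf{coker}(x)$ and $\mathsf{coker}(y)$) is a morphism $p\colon A_3\to A$ such that $p\langle\pi_1,\pi_2,\pi_2\rangle=\pi_1$ as morphisms $A\times_{A/X}A\to A$ and $p\langle \pi_1,\pi_1,\pi_2\rangle=\pi_2$ as morphisms $A\times_{A/Y}A\to A$, where $\pi_1,\pi_2$ denote the kernel-pair projections. *)

theory Defs
  imports Main
begin

record ('o, 'm) cat =
  Obj  :: "'o set"
  Arr  :: "'m set"
  Dom  :: "'m \<Rightarrow> 'o"
  Cod  :: "'m \<Rightarrow> 'o"
  Id   :: "'o \<Rightarrow> 'm"
  Comp :: "'m \<Rightarrow> 'm \<Rightarrow> 'm"   \<comment> \<open>Comp C g f = g \<circ> f\<close>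

definition hom :: "('o, 'm) cat \<Rightarrow> 'o \<Rightarrow> 'o \<Rightarrow> 'm \<Rightarrow> bool" where
  "hom C a b f \<longleftrightarrow> f \<in> Arr C \<and> Dom C f = a \<and> Cod C f = b"

definition category :: "('o, 'm) cat \<Rightarrow> bool" where
  "category C \<longleftrightarrow>
     (\<forall>f\<in>Arr C. Dom C f \<in> Obj C \<and> Cod C f \<in> Obj C) \<and>
     (\<forall>a\<in>Obj C. hom C a a (Id C a)) \<and>
     (\<forall>f\<in>Arr C. \<forall>g\<in>Arr C. Cod C f = Dom C g \<longrightarrow> hom C (Dom C f) (Cod C g) (Comp C g f)) \<and>
     (\<forall>f\<in>Arr C. Comp C (Id C (Cod C f)) f = f \<and> Comp C f (Id C (Dom C f)) = f) \<and>
     (\<forall>f\<in>Arr C. \<forall>g\<in>Arr C. \<forall>h\<in>Arr C. Cod C f = Dom C g \<longrightarrow> Cod C g = Dom C h \<longrightarrow>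
         Comp C h (Comp C g f) = Comp C (Comp C h g) f)"

definition is_initial :: "('o, 'm) cat \<Rightarrow> 'o \<Rightarrow> bool" where
  "is_initial C z \<longleftrightarrow> z \<in> Obj C \<and> (\<forall>b\<in>Obj C. \<exists>!f. hom C z b f)"

definition is_terminal :: "('o, 'm) cat \<Rightarrow> 'o \<Rightarrow> bool" where
  "is_terminal C z \<longleftrightarrow> z \<in> Obj C \<and> (\<forall>b\<in>Obj C. \<exists>!f. hom C b z f)"

definition is_zero_obj :: "('o, 'm) cat \<Rightarrow> 'o \<Rightarrow> bool" where
  "is_zero_obj C z \<longleftrightarrow> is_initial C z \<and> is_terminal C z"

definition pointed :: "('o, 'm) cat \<Rightarrow> bool" where
  "pointed C \<longleftrightarrow> (\<exists>z. is_zero_obj C z)"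

text \<open>The zero morphism a \<rightarrow> b (factoring through a zero object; independent of the choice).\<close>
definition zero_arr :: "('o, 'm) cat \<Rightarrow> 'o \<Rightarrow> 'o \<Rightarrow> 'm" where
  "zero_arr C a b = (let z = (SOME z. is_zero_obj C z) in
      Comp C (THE g. hom C z b g) (THE f. hom C a z f))"

definition is_product :: "('o, 'm) cat \<Rightarrow> 'o \<Rightarrow> 'o \<Rightarrow> 'o \<Rightarrow> 'm \<Rightarrow> 'm \<Rightarrow> bool" where
  "is_product C a b P p1 p2 \<longleftrightarrow> P \<in> Obj C \<and> hom C P a p1 \<and> hom C P b p2 \<and>
     (\<forall>T f g. hom C T a f \<longrightarrow> hom C T b g \<longrightarrow>
        (\<exists>!h. hom C T P h \<and> Comp C p1 h = f \<and> Comp C p2 h = g))"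

definition is_coproduct :: "('o, 'm) cat \<Rightarrow> 'o \<Rightarrow> 'o \<Rightarrow> 'o \<Rightarrow> 'm \<Rightarrow> 'm \<Rightarrow> bool" where
  "is_coproduct C a b S i1 i2 \<longleftrightarrow> S \<in> Obj C \<and> hom C a S i1 \<and> hom C b S i2 \<and>
     (\<forall>T f g. hom C a T f \<longrightarrow> hom C b T g \<longrightarrow>
        (\<exists>!h. hom C S T h \<and> Comp C h i1 = f \<and> Comp C h i2 = g))"

definition is_equalizer :: "('o, 'm) cat \<Rightarrow> 'm \<Rightarrow> 'm \<Rightarrow> 'o \<Rightarrow> 'm \<Rightarrow> bool" where
  "is_equalizer C f g E e \<longleftrightarrow> E \<in> Obj C \<and> hom C E (Dom C f) e \<and>
     Comp C f e = Comp C g e \<and>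
     (\<forall>T k. hom C T (Dom C f) k \<longrightarrow> Comp C f k = Comp C g k \<longrightarrow>
        (\<exists>!h. hom C T E h \<and> Comp C e h = k))"

definition is_coequalizer :: "('o, 'm) cat \<Rightarrow> 'm \<Rightarrow> 'm \<Rightarrow> 'o \<Rightarrow> 'm \<Rightarrow> bool" where
  "is_coequalizer C f g Q q \<longleftrightarrow> Q \<in> Obj C \<and> hom C (Cod C f) Q q \<and>
     Comp C q f = Comp C q g \<and>
     (\<forall>T k. hom C (Cod C f) T k \<longrightarrow> Comp C k f = Comp C k g \<longrightarrow>
        (\<exists>!h. hom C Q T h \<and> Comp C h q = k))"

definition has_finite_limits :: "('o, 'm) cat \<Rightarrow> bool" where
  "has_finite_limits C \<longleftrightarrow> (\<exists>t. is_terminal C t) \<and>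
     (\<forall>a\<in>Obj C. \<forall>b\<in>Obj C. \<exists>P p1 p2. is_product C a b P p1 p2) \<and>
     (\<forall>f g. f \<in> Arr C \<longrightarrow> g \<in> Arr C \<longrightarrow> Dom C f = Dom C g \<longrightarrow> Cod C f = Cod C g \<longrightarrow>
        (\<exists>E e. is_equalizer C f g E e))"

definition has_finite_colimits :: "('o, 'm) cat \<Rightarrow> bool" where
  "has_finite_colimits C \<longleftrightarrow> (\<exists>t. is_initial C t) \<and>
     (\<forall>a\<in>Obj C. \<forall>b\<in>Obj C. \<exists>S i1 i2. is_coproduct C a b S i1 i2) \<and>
     (\<forall>f g. f \<in> Arr C \<longrightarrow> g \<in> Arr C \<longrightarrow> Dom C f = Dom C g \<longrightarrow> Cod C f = Cod C g \<longrightarrow>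
        (\<exists>Q q. is_coequalizer C f g Q q))"

definition is_pullback :: "('o, 'm) cat \<Rightarrow> 'm \<Rightarrow> 'm \<Rightarrow> 'o \<Rightarrow> 'm \<Rightarrow> 'm \<Rightarrow> bool" where
  "is_pullback C f g P p1 p2 \<longleftrightarrow> f \<in> Arr C \<and> g \<in> Arr C \<and> Cod C f = Cod C g \<and>
     P \<in> Obj C \<and> hom C P (Dom C f) p1 \<and> hom C P (Dom C g) p2 \<and>
     Comp C f p1 = Comp C g p2 \<and>
     (\<forall>T a b. hom C T (Dom C f) a \<longrightarrow> hom C T (Dom C g) b \<longrightarrow> Comp C f a = Comp C g b \<longrightarrow>
        (\<exists>!h. hom C T P h \<and> Comp C p1 h = a \<and> Comp C p2 h = b))"

definition is_cokernel :: "('o, 'm) cat \<Rightarrow> 'm \<Rightarrow> 'o \<Rightarrow> 'm \<Rightarrow> bool" where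
  "is_cokernel C x Q q \<longleftrightarrow> x \<in> Arr C \<and> Q \<in> Obj C \<and> hom C (Cod C x) Q q \<and>
     Comp C q x = zero_arr C (Dom C x) Q \<and>
     (\<forall>T f. hom C (Cod C x) T f \<longrightarrow> Comp C f x = zero_arr C (Dom C x) T \<longrightarrow>
        (\<exists>!h. hom C Q T h \<and> Comp C h q = f))"

text \<open>Limit A_3 of  A --qx--> A/X <--qx-- A --qy--> A/Y <--qy-- A, projections l1, l2, l3.\<close>
definition is_A3 :: "('o, 'm) cat \<Rightarrow> 'm \<Rightarrow> 'm \<Rightarrow> 'o \<Rightarrow> 'm \<Rightarrow> 'm \<Rightarrow> 'm \<Rightarrow> bool" where
  "is_A3 C qx qy L l1 l2 l3 \<longleftrightarrow> qx \<in> Arr C \<and> qy \<in> Arr C \<and> Dom C qx = Dom C qy \<and>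
     L \<in> Obj C \<and> hom C L (Dom C qx) l1 \<and> hom C L (Dom C qx) l2 \<and> hom C L (Dom C qx) l3 \<and>
     Comp C qx l1 = Comp C qx l2 \<and> Comp C qy l2 = Comp C qy l3 \<and>
     (\<forall>T a b c. hom C T (Dom C qx) a \<longrightarrow> hom C T (Dom C qx) b \<longrightarrow> hom C T (Dom C qx) c \<longrightarrow>
        Comp C qx a = Comp C qx b \<longrightarrow> Comp C qy b = Comp C qy c \<longrightarrow>
        (\<exists>!h. hom C T L h \<and> Comp C l1 h = a \<and> Comp C l2 h = b \<and> Comp C l3 h = c))"

definition copair :: "('o, 'm) cat \<Rightarrow> 'o \<Rightarrow> 'm \<Rightarrow> 'm \<Rightarrow> 'm \<Rightarrow> 'm \<Rightarrow> 'm" where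
  "copair C S i1 i2 f g = (THE h. hom C S (Cod C f) h \<and> Comp C h i1 = f \<and> Comp C h i2 = g)"

definition pbpair :: "('o, 'm) cat \<Rightarrow> 'o \<Rightarrow> 'm \<Rightarrow> 'm \<Rightarrow> 'm \<Rightarrow> 'm \<Rightarrow> 'm" where
  "pbpair C P p1 p2 a b = (THE h. hom C (Dom C a) P h \<and> Comp C p1 h = a \<and> Comp C p2 h = b)"

definition triple :: "('o, 'm) cat \<Rightarrow> 'o \<Rightarrow> 'm \<Rightarrow> 'm \<Rightarrow> 'm \<Rightarrow> 'm \<Rightarrow> 'm \<Rightarrow> 'm \<Rightarrow> 'm" where
  "triple C L l1 l2 l3 a b c = (THE h. hom C (Dom C a) L h \<and>
      Comp C l1 h = a \<and> Comp C l2 h = b \<and> Comp C l3 h = c)"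

text \<open>Internal multiplication X \<times> Y \<rightarrow> A over (W,w): m : (W+X)\<times>_W(W+Y) \<rightarrow> A, where
  (SX,i1,i2) = W+X, (SY,j1,j2) = W+Y and (P,pi1,pi2) is the pullback of [1,0] and [1,0].\<close>
definition internal_mult ::
  "('o, 'm) cat \<Rightarrow> 'm \<Rightarrow> 'm \<Rightarrow> 'm \<Rightarrow> 'o \<Rightarrow> 'm \<Rightarrow> 'm \<Rightarrow> 'o \<Rightarrow> 'm \<Rightarrow> 'm \<Rightarrow> 'o \<Rightarrow> 'm \<Rightarrow> 'm \<Rightarrow> 'm \<Rightarrow> bool"
where
  "internal_mult C w x y SX i1 i2 SY j1 j2 P pi1 pi2 m \<longleftrightarrow>
     hom C P (Cod C w) m \<and>
     Comp C m (pbpair C P pi1 pi2 (Id C SX)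
                 (Comp C j1 (copair C SX i1 i2 (Id C (Dom C w)) (zero_arr C (Dom C x) (Dom C w)))))
       = copair C SX i1 i2 w x \<and>
     Comp C m (pbpair C P pi1 pi2
                 (Comp C i1 (copair C SY j1 j2 (Id C (Dom C w)) (zero_arr C (Dom C y) (Dom C w))))
                 (Id C SY))
       = copair C SY j1 j2 w y"

text \<open>Internal pregroupoid structure p : A_3 \<rightarrow> A on the span A/X \<leftarrow> A \<rightarrow> A/Y; (KX,k1,k2) and
  (KY,r1,r2) are the kernel pairs of qx = coker x and qy = coker y.\<close>
definition pregroupoid_structure ::
  "('o, 'm) cat \<Rightarrow> 'o \<Rightarrow> 'm \<Rightarrow> 'm \<Rightarrow> 'm \<Rightarrow> 'm \<Rightarrow> 'm \<Rightarrow> 'm \<Rightarrow> 'm \<Rightarrow> 'm \<Rightarrow> bool"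
where
  "pregroupoid_structure C L l1 l2 l3 k1 k2 r1 r2 p \<longleftrightarrow>
     hom C L (Cod C l1) p \<and>
     Comp C p (triple C L l1 l2 l3 k1 k2 k2) = k1 \<and>
     Comp C p (triple C L l1 l2 l3 r1 r1 r2) = r2"

definition gamma ::
  "('o, 'm) cat \<Rightarrow> 'm \<Rightarrow> 'm \<Rightarrow> 'm \<Rightarrow> 'o \<Rightarrow> 'm \<Rightarrow> 'm \<Rightarrow> 'o \<Rightarrow> 'm \<Rightarrow> 'm \<Rightarrow> 'm \<Rightarrow> 'm
     \<Rightarrow> 'o \<Rightarrow> 'm \<Rightarrow> 'm \<Rightarrow> 'm \<Rightarrow> 'm"
where
  "gamma C w x y SX i1 i2 SY j1 j2 pi1 pi2 L l1 l2 l3 =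
     triple C L l1 l2 l3
       (Comp C (copair C SX i1 i2 w x) pi1)
       (Comp C (copair C SX i1 i2 w (zero_arr C (Dom C x) (Cod C w))) pi1)
       (Comp C (copair C SY j1 j2 w y) pi2)"

end

theory Submission
  imports Defs
begin

lemma hom_arr: "hom C a b f \<Longrightarrow> f \<in> Arr C \<and> Dom C f = a \<and> Cod C f = b"
  by (simp add: hom_def)

lemma cat_parts: assumes "category C"
  shows "\<forall>f\<in>Arr C. Dom C f \<in> Obj C \<and> Cod C f \<in> Obj C"
   "\<forall>a\<in>Obj C. hom C a a (Id C a)"
   "\<forall>f\<in>Arr C. \<forall>g\<in>Arr C. Cod C f = Dom C g \<longrightarrow> hom C (Dom C f) (Cod C g) (Comp C g f)"
   "\<forall>f\<in>Arr C. Comp C (Id C (Cod C f)) f = f \<and> Comp C f (Id C (Dom C f)) = f"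
   "\<forall>f\<in>Arr C. \<forall>g\<in>Arr C. \<forall>h\<in>Arr C. Cod C f = Dom C g \<longrightarrow> Cod C g = Dom C h \<longrightarrow>
         Comp C h (Comp C g f) = Comp C (Comp C h g) f"
  using assms unfolding category_def by blast+

lemma hom_obj: "category C \<Longrightarrow> hom C a b f \<Longrightarrow> a \<in> Obj C \<and> b \<in> Obj C"
  using cat_parts(1)[of C] unfolding hom_def by blast

lemma comp_hom: assumes "category C" "hom C a b f" "hom C b c g" shows "hom C a c (Comp C g f)"
proof -
  have "f \<in> Arr C" "g \<in> Arr C" "Cod C f = Dom C g" "Dom C f = a" "Cod C g = c"
    using assms(2,3) unfolding hom_def by auto
  thus ?thesis using cat_parts(3)[OF assms(1)] by metis
qed

lemma assoc: assumes "category C" "hom C a b f" "hom C b c g" "hom C c d h"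
  shows "Comp C h (Comp C g f) = Comp C (Comp C h g) f"
proof -
  have "f \<in> Arr C" "g \<in> Arr C" "h \<in> Arr C" "Cod C f = Dom C g" "Cod C g = Dom C h"
    using assms(2-4) unfolding hom_def by auto
  thus ?thesis using cat_parts(5)[OF assms(1)] by blast
qed

lemma id_l: assumes "category C" "hom C a b f" shows "Comp C (Id C b) f = f"
proof -
  have "f \<in> Arr C" "Cod C f = b" using assms(2) unfolding hom_def by auto
  thus ?thesis using cat_parts(4)[OF assms(1)] by blast
qed

lemma id_r: assumes "category C" "hom C a b f" shows "Comp C f (Id C a) = f"
proof -
  have "f \<in> Arr C" "Dom C f = a" using assms(2) unfolding hom_def by auto
  thus ?thesis using cat_parts(4)[OF assms(1)] by blast
qed

lemma id_hom: "category C \<Longrightarrow> a \<in> Obj C \<Longrightarrow> hom C a a (Id C a)"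
  using cat_parts(2) by blast

definition zobj where "zobj C = (SOME z. is_zero_obj C z)"
definition zF where "zF C a = (THE f. hom C a (zobj C) f)"
definition zG where "zG C b = (THE g. hom C (zobj C) b g)"

lemma zobj: "pointed C \<Longrightarrow> is_zero_obj C (zobj C)"
  unfolding pointed_def zobj_def by (rule someI_ex)

lemma zF: assumes "pointed C" "a \<in> Obj C"
  shows "hom C a (zobj C) (zF C a)" "hom C a (zobj C) f \<Longrightarrow> f = zF C a"
proof -
  have u: "\<exists>!f. hom C a (zobj C) f" using zobj[OF assms(1)] assms(2)
    unfolding is_zero_obj_def is_terminal_def by blast
  show "hom C a (zobj C) (zF C a)" unfolding zF_def using theI'[OF u] .
  show "hom C a (zobj C) f \<Longrightarrow> f = zF C a" unfolding zF_def using the1_equality[OF u] by metis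
qed

lemma zG: assumes "pointed C" "b \<in> Obj C"
  shows "hom C (zobj C) b (zG C b)" "hom C (zobj C) b g \<Longrightarrow> g = zG C b"
proof -
  have u: "\<exists>!g. hom C (zobj C) b g" using zobj[OF assms(1)] assms(2)
    unfolding is_zero_obj_def is_initial_def by blast
  show "hom C (zobj C) b (zG C b)" unfolding zG_def using theI'[OF u] .
  show "hom C (zobj C) b g \<Longrightarrow> g = zG C b" unfolding zG_def using the1_equality[OF u] by metis
qed

lemma zero_eq: "zero_arr C a b = Comp C (zG C b) (zF C a)"
  unfolding zero_arr_def zG_def zF_def zobj_def Let_def by simp

lemma zero_hom: "category C \<Longrightarrow> pointed C \<Longrightarrow> a \<in> Obj C \<Longrightarrow> b \<in> Obj C \<Longrightarrow> hom C a b (zero_arr C a b)"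
  unfolding zero_eq by (rule comp_hom) (auto intro: zF zG)

lemma zero_left: assumes "category C" "pointed C" "a \<in> Obj C" "hom C b c h"
  shows "Comp C h (zero_arr C a b) = zero_arr C a c"
proof -
  have bc: "b \<in> Obj C" "c \<in> Obj C" using hom_obj[OF assms(1,4)] by auto
  have "Comp C h (zero_arr C a b) = Comp C (Comp C h (zG C b)) (zF C a)"
    unfolding zero_eq by (rule assoc[OF assms(1) zF(1)[OF assms(2,3)] zG(1)[OF assms(2) bc(1)] assms(4)])
  also have "Comp C h (zG C b) = zG C c"
    by (rule zG(2)[OF assms(2) bc(2)]) (rule comp_hom[OF assms(1) zG(1)[OF assms(2) bc(1)] assms(4)])
  finally show ?thesis unfolding zero_eq .
qed

lemma zero_right: assumes "category C" "pointed C" "c \<in> Obj C" "hom C a b g"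
  shows "Comp C (zero_arr C b c) g = zero_arr C a c"
proof -
  have ab: "a \<in> Obj C" "b \<in> Obj C" using hom_obj[OF assms(1,4)] by auto
  have "Comp C (zero_arr C b c) g = Comp C (zG C c) (Comp C (zF C b) g)"
    unfolding zero_eq by (rule assoc[OF assms(1) assms(4) zF(1)[OF assms(2) ab(2)] zG(1)[OF assms(2,3)], symmetric])
  also have "Comp C (zF C b) g = zF C a"
    by (rule zF(2)[OF assms(2) ab(1)]) (rule comp_hom[OF assms(1) assms(4) zF(1)[OF assms(2) ab(2)]])
  finally show ?thesis unfolding zero_eq .
qed

lemma copair_prop: assumes "is_coproduct C a b S i1 i2" "hom C a T f" "hom C b T g"
  shows "hom C S T (copair C S i1 i2 f g) \<and> Comp C (copair C S i1 i2 f g) i1 = f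
         \<and> Comp C (copair C S i1 i2 f g) i2 = g"
proof -
  have u: "\<exists>!h. hom C S T h \<and> Comp C h i1 = f \<and> Comp C h i2 = g"
    using assms unfolding is_coproduct_def by blast
  have "Cod C f = T" using assms(2) hom_def by metis
  thus ?thesis unfolding copair_def using theI'[OF u] by simp
qed

lemma copair_unique: assumes "is_coproduct C a b S i1 i2" "hom C a T f" "hom C b T g"
  "hom C S T h" "Comp C h i1 = f" "Comp C h i2 = g"
  shows "copair C S i1 i2 f g = h"
proof -
  have u: "\<exists>!h. hom C S T h \<and> Comp C h i1 = f \<and> Comp C h i2 = g"
    using assms unfolding is_coproduct_def by blast
  have "Cod C f = T" using assms(2) hom_def by metis
  thus ?thesis unfolding copair_def using the1_equality[OF u] assms(4-6) by simp
qed

lemma pbpair_prop: assumes "is_pullback C f g P p1 p2" "hom C T (Dom C f) a" "hom C T (Dom C g) b"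
  "Comp C f a = Comp C g b"
  shows "hom C T P (pbpair C P p1 p2 a b) \<and> Comp C p1 (pbpair C P p1 p2 a b) = a
         \<and> Comp C p2 (pbpair C P p1 p2 a b) = b"
proof -
  have u: "\<exists>!h. hom C T P h \<and> Comp C p1 h = a \<and> Comp C p2 h = b"
    using assms unfolding is_pullback_def by blast
  have "Dom C a = T" using assms(2) hom_def by metis
  thus ?thesis unfolding pbpair_def using theI'[OF u] by simp
qed

lemma triple_prop: assumes "is_A3 C qx qy L l1 l2 l3" "hom C T (Dom C qx) a" "hom C T (Dom C qx) b"
   "hom C T (Dom C qx) c" "Comp C qx a = Comp C qx b" "Comp C qy b = Comp C qy c"
  shows "hom C T L (triple C L l1 l2 l3 a b c) \<and> Comp C l1 (triple C L l1 l2 l3 a b c) = a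
     \<and> Comp C l2 (triple C L l1 l2 l3 a b c) = b \<and> Comp C l3 (triple C L l1 l2 l3 a b c) = c"
proof -
  have u: "\<exists>!h. hom C T L h \<and> Comp C l1 h = a \<and> Comp C l2 h = b \<and> Comp C l3 h = c"
    using assms unfolding is_A3_def by blast
  have "Dom C a = T" using assms(2) hom_def by metis
  thus ?thesis unfolding triple_def using theI'[OF u] by simp
qed

lemma triple_unique: assumes "is_A3 C qx qy L l1 l2 l3" "hom C T (Dom C qx) a" "hom C T (Dom C qx) b"
   "hom C T (Dom C qx) c" "Comp C qx a = Comp C qx b" "Comp C qy b = Comp C qy c"
   "hom C T L h" "Comp C l1 h = a" "Comp C l2 h = b" "Comp C l3 h = c"
  shows "triple C L l1 l2 l3 a b c = h"
proof -
  have u: "\<exists>!h. hom C T L h \<and> Comp C l1 h = a \<and> Comp C l2 h = b \<and> Comp C l3 h = c"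
    using assms unfolding is_A3_def by blast
  have "Dom C a = T" using assms(2) hom_def by metis
  thus ?thesis unfolding triple_def using the1_equality[OF u] assms(7-10) by simp
qed


theorem theorem1p3:
  fixes C :: "('o, 'm) cat"
  assumes "category C" and "pointed C"
    and "has_finite_limits C" and "has_finite_colimits C"
    and "hom C W A w" and "hom C X A x" and "hom C Y A y"
    and "is_coproduct C W X SX i1 i2" and "is_coproduct C W Y SY j1 j2"
    and "is_pullback C (copair C SX i1 i2 (Id C W) (zero_arr C X W))
                       (copair C SY j1 j2 (Id C W) (zero_arr C Y W)) P pi1 pi2"
    and "is_cokernel C x QX qx" and "is_cokernel C y QY qy"
    and "is_A3 C qx qy L l1 l2 l3"
    and "is_pullback C qx qx KX k1 k2" and "is_pullback C qy qy KY r1 r2"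
    and "pregroupoid_structure C L l1 l2 l3 k1 k2 r1 r2 p"
  shows "internal_mult C w x y SX i1 i2 SY j1 j2 P pi1 pi2
           (Comp C p (gamma C w x y SX i1 i2 SY j1 j2 pi1 pi2 L l1 l2 l3))"
proof -
  note cat = assms(1) and pt = assms(2)
  have hw: "hom C W A w" and hx: "hom C X A x" and hy: "hom C Y A y" using assms by auto
  have oW: "W \<in> Obj C" and oA: "A \<in> Obj C" using hom_obj[OF cat hw] by auto
  have oX: "X \<in> Obj C" using hom_obj[OF cat hx] by auto
  have oY: "Y \<in> Obj C" using hom_obj[OF cat hy] by auto
  have dx: "Dom C x = X" "Cod C x = A" and dy: "Dom C y = Y" "Cod C y = A"
    and dw: "Dom C w = W" "Cod C w = A" using hx hy hw hom_def by metis+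
  note cX = assms(8) and cY = assms(9)
  have i1h: "hom C W SX i1" and i2h: "hom C X SX i2" and j1h: "hom C W SY j1" and j2h: "hom C Y SY j2"
    using cX cY is_coproduct_def by metis+
  have oSX: "SX \<in> Obj C" and oSY: "SY \<in> Obj C" using cX cY is_coproduct_def by metis+
  have z0XW: "hom C X W (zero_arr C X W)" using zero_hom cat pt oX oW by metis
  have z0YW: "hom C Y W (zero_arr C Y W)" using zero_hom cat pt oY oW by metis
  have z0XA: "hom C X A (zero_arr C X A)" using zero_hom cat pt oX oA by metis
  have z0YA: "hom C Y A (zero_arr C Y A)" using zero_hom cat pt oY oA by metis
  have idW: "hom C W W (Id C W)" using id_hom cat oW by metis
  define s where "s = copair C SX i1 i2 (Id C W) (zero_arr C X W)"
  define t where "t = copair C SY j1 j2 (Id C W) (zero_arr C Y W)"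
  define cwx where "cwx = copair C SX i1 i2 w x"
  define cw0 where "cw0 = copair C SX i1 i2 w (zero_arr C X A)"
  define cwy where "cwy = copair C SY j1 j2 w y"
  define cw0Y where "cw0Y = copair C SY j1 j2 w (zero_arr C Y A)"
  have s: "hom C SX W s" "Comp C s i1 = Id C W" "Comp C s i2 = zero_arr C X W"
    using copair_prop[OF cX idW z0XW] s_def by auto
  have t: "hom C SY W t" "Comp C t j1 = Id C W" "Comp C t j2 = zero_arr C Y W"
    using copair_prop[OF cY idW z0YW] t_def by auto
  have cwx: "hom C SX A cwx" "Comp C cwx i1 = w" "Comp C cwx i2 = x"
    using copair_prop[OF cX hw hx] cwx_def by auto
  have cw0: "hom C SX A cw0" "Comp C cw0 i1 = w" "Comp C cw0 i2 = zero_arr C X A"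
    using copair_prop[OF cX hw z0XA] cw0_def by auto
  have cwy: "hom C SY A cwy" "Comp C cwy j1 = w" "Comp C cwy j2 = y"
    using copair_prop[OF cY hw hy] cwy_def by auto
  have cw0Y: "hom C SY A cw0Y" "Comp C cw0Y j1 = w" "Comp C cw0Y j2 = zero_arr C Y A"
    using copair_prop[OF cY hw z0YA] cw0Y_def by auto
  have I1: "Comp C w s = cw0"
  proof -
    have "hom C SX A (Comp C w s)" using comp_hom cat s(1) hw by metis
    moreover have "Comp C (Comp C w s) i1 = w" using assoc[OF cat i1h s(1) hw] s(2) id_r[OF cat hw] by simp
    moreover have "Comp C (Comp C w s) i2 = zero_arr C X A"
      using assoc[OF cat i2h s(1) hw] s(3) zero_left[OF cat pt oX hw] by simp
    ultimately show ?thesis using copair_unique[OF cX hw z0XA] cw0_def by metis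
  qed
  have I2: "Comp C w t = cw0Y"
  proof -
    have "hom C SY A (Comp C w t)" using comp_hom cat t(1) hw by metis
    moreover have "Comp C (Comp C w t) j1 = w" using assoc[OF cat j1h t(1) hw] t(2) id_r[OF cat hw] by simp
    moreover have "Comp C (Comp C w t) j2 = zero_arr C Y A"
      using assoc[OF cat j2h t(1) hw] t(3) zero_left[OF cat pt oY hw] by simp
    ultimately show ?thesis using copair_unique[OF cY hw z0YA] cw0Y_def by metis
  qed
  note kX = assms(11) and kY = assms(12)
  have qx: "hom C A QX qx" "Comp C qx x = zero_arr C X QX" "QX \<in> Obj C"
    using kX dx unfolding is_cokernel_def by auto
  have qy: "hom C A QY qy" "Comp C qy y = zero_arr C Y QY" "QY \<in> Obj C"
    using kY dy unfolding is_cokernel_def by auto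
  have I3: "Comp C qx cwx = Comp C qx cw0"
  proof -
    have hq: "hom C W QX (Comp C qx w)" using comp_hom cat hw qx(1) by metis
    have zq: "hom C X QX (zero_arr C X QX)" using zero_hom cat pt oX qx(3) by metis
    have a: "copair C SX i1 i2 (Comp C qx w) (zero_arr C X QX) = Comp C qx cwx"
      apply (rule copair_unique[OF cX hq zq])
      using comp_hom[OF cat cwx(1) qx(1)] assoc[OF cat i1h cwx(1) qx(1)] assoc[OF cat i2h cwx(1) qx(1)]
        cwx qx by auto
    have b: "copair C SX i1 i2 (Comp C qx w) (zero_arr C X QX) = Comp C qx cw0"
      apply (rule copair_unique[OF cX hq zq])
      using comp_hom[OF cat cw0(1) qx(1)] assoc[OF cat i1h cw0(1) qx(1)] assoc[OF cat i2h cw0(1) qx(1)]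
        cw0 zero_left[OF cat pt oX qx(1)] by auto
    from a b show ?thesis by simp
  qed
  have I4: "Comp C qy cw0Y = Comp C qy cwy"
  proof -
    have hq: "hom C W QY (Comp C qy w)" using comp_hom cat hw qy(1) by metis
    have zq: "hom C Y QY (zero_arr C Y QY)" using zero_hom cat pt oY qy(3) by metis
    have a: "copair C SY j1 j2 (Comp C qy w) (zero_arr C Y QY) = Comp C qy cwy"
      apply (rule copair_unique[OF cY hq zq])
      using comp_hom[OF cat cwy(1) qy(1)] assoc[OF cat j1h cwy(1) qy(1)] assoc[OF cat j2h cwy(1) qy(1)]
        cwy qy by auto
    have b: "copair C SY j1 j2 (Comp C qy w) (zero_arr C Y QY) = Comp C qy cw0Y"
      apply (rule copair_unique[OF cY hq zq])
      using comp_hom[OF cat cw0Y(1) qy(1)] assoc[OF cat j1h cw0Y(1) qy(1)] assoc[OF cat j2h cw0Y(1) qy(1)]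
        cw0Y zero_left[OF cat pt oY qy(1)] by auto
    from a b show ?thesis by simp
  qed
  have dqx: "Dom C qx = A" and dqy: "Dom C qy = A" using qx qy hom_def by metis+
  have ds: "Dom C s = SX" and dt: "Dom C t = SY" using s t hom_def by metis+
  note PB = assms(10)[folded s_def t_def]
  have pi: "hom C P SX pi1" "hom C P SY pi2" "Comp C s pi1 = Comp C t pi2"
    using PB ds dt unfolding is_pullback_def by auto
  note A3 = assms(13)
  have A3': "is_A3 C qx qy L l1 l2 l3" by fact
  have ls: "hom C L A l1" "hom C L A l2" "hom C L A l3"
    using A3 dqx unfolding is_A3_def by auto
  note KXp = assms(14) and KYp = assms(15)
  have ks: "hom C KX A k1" "hom C KX A k2" "Comp C qx k1 = Comp C qx k2"
    using KXp dqx unfolding is_pullback_def by auto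
  have rs: "hom C KY A r1" "hom C KY A r2" "Comp C qy r1 = Comp C qy r2"
    using KYp dqy unfolding is_pullback_def by auto
  have pg: "hom C L A p" "Comp C p (triple C L l1 l2 l3 k1 k2 k2) = k1"
      "Comp C p (triple C L l1 l2 l3 r1 r1 r2) = r2"
    using assms(16) ls hom_def unfolding pregroupoid_structure_def by metis+
  define g where "g = gamma C w x y SX i1 i2 SY j1 j2 pi1 pi2 L l1 l2 l3"
  have gdef: "g = triple C L l1 l2 l3 (Comp C cwx pi1) (Comp C cw0 pi1) (Comp C cwy pi2)"
    unfolding g_def gamma_def cwx_def cw0_def cwy_def dx dw by simp
  have ha: "hom C P A (Comp C cwx pi1)" using comp_hom cat pi(1) cwx(1) by metis
  have hb: "hom C P A (Comp C cw0 pi1)" using comp_hom cat pi(1) cw0(1) by metis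
  have hc: "hom C P A (Comp C cwy pi2)" using comp_hom cat pi(2) cwy(1) by metis
  have e1: "Comp C qx (Comp C cwx pi1) = Comp C qx (Comp C cw0 pi1)"
    using assoc[OF cat pi(1) cwx(1) qx(1)] assoc[OF cat pi(1) cw0(1) qx(1)] I3 by simp
  have "Comp C cw0 pi1 = Comp C cw0Y pi2"
    using assoc[OF cat pi(1) s(1) hw] assoc[OF cat pi(2) t(1) hw] I1 I2 pi(3) by simp
  hence e2: "Comp C qy (Comp C cw0 pi1) = Comp C qy (Comp C cwy pi2)"
    using assoc[OF cat pi(2) cw0Y(1) qy(1)] assoc[OF cat pi(2) cwy(1) qy(1)] I4 by simp
  have G: "hom C P L g" "Comp C l1 g = Comp C cwx pi1" "Comp C l2 g = Comp C cw0 pi1"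
      "Comp C l3 g = Comp C cwy pi2"
    using triple_prop[OF A3, of P] ha hb hc e1 e2 dqx gdef by auto
  have mh: "hom C P A (Comp C p g)" using comp_hom cat G(1) pg(1) by metis
  have sj: "hom C SX SY (Comp C j1 s)" using comp_hom cat s(1) j1h by metis
  have idSX: "hom C SX SX (Id C SX)" using id_hom cat oSX by metis
  have "Comp C t (Comp C j1 s) = s"
    using assoc[OF cat s(1) j1h t(1)] t(2) id_l[OF cat s(1)] by simp
  hence "Comp C s (Id C SX) = Comp C t (Comp C j1 s)" using id_r[OF cat s(1)] by simp
  hence E1: "hom C SX P (pbpair C P pi1 pi2 (Id C SX) (Comp C j1 s))"
     "Comp C pi1 (pbpair C P pi1 pi2 (Id C SX) (Comp C j1 s)) = Id C SX"
     "Comp C pi2 (pbpair C P pi1 pi2 (Id C SX) (Comp C j1 s)) = Comp C j1 s"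
    using pbpair_prop[OF PB] idSX sj ds dt by auto
  define e where "e = pbpair C P pi1 pi2 (Id C SX) (Comp C j1 s)"
  have cwyj1s: "Comp C cwy (Comp C j1 s) = cw0"
    using assoc[OF cat s(1) j1h cwy(1)] cwy(2) I1 by simp
  have ge: "hom C SX L (Comp C g e)" "Comp C l1 (Comp C g e) = cwx" "Comp C l2 (Comp C g e) = cw0"
    "Comp C l3 (Comp C g e) = cw0"
    using comp_hom[OF cat E1(1) G(1)] assoc[OF cat E1(1) G(1) ls(1)] assoc[OF cat E1(1) G(1) ls(2)]
      assoc[OF cat E1(1) G(1) ls(3)] G assoc[OF cat E1(1) pi(1) cwx(1)] assoc[OF cat E1(1) pi(1) cw0(1)]
      assoc[OF cat E1(1) pi(2) cwy(1)] E1 id_r[OF cat cwx(1)] id_r[OF cat cw0(1)] cwyj1s e_def by auto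
  define hX where "hX = pbpair C KX k1 k2 cwx cw0"
  have HX: "hom C SX KX hX" "Comp C k1 hX = cwx" "Comp C k2 hX = cw0"
    using pbpair_prop[OF KXp, of SX cwx cw0] cwx(1) cw0(1) dqx I3 hX_def by auto
  have T1: "hom C KX L (triple C L l1 l2 l3 k1 k2 k2)" "Comp C l1 (triple C L l1 l2 l3 k1 k2 k2) = k1"
     "Comp C l2 (triple C L l1 l2 l3 k1 k2 k2) = k2" "Comp C l3 (triple C L l1 l2 l3 k1 k2 k2) = k2"
    using triple_prop[OF A3, of KX k1 k2 k2] ks dqx by auto
  have "Comp C g e = Comp C (triple C L l1 l2 l3 k1 k2 k2) hX"
  proof -
    have "triple C L l1 l2 l3 cwx cw0 cw0 = Comp C g e"
      by (rule triple_unique[OF A3]) (use cwx cw0 I3 ge dqx in auto)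
    moreover have "triple C L l1 l2 l3 cwx cw0 cw0 = Comp C (triple C L l1 l2 l3 k1 k2 k2) hX"
      by (rule triple_unique[OF A3]) (use cwx cw0 I3 dqx comp_hom[OF cat HX(1) T1(1)]
          assoc[OF cat HX(1) T1(1) ls(1)] assoc[OF cat HX(1) T1(1) ls(2)] assoc[OF cat HX(1) T1(1) ls(3)]
          T1 HX in auto)
    ultimately show ?thesis by simp
  qed
  hence M1: "Comp C (Comp C p g) e = cwx"
    using assoc[OF cat E1(1) G(1) pg(1)] assoc[OF cat HX(1) T1(1) pg(1)] pg(2) HX(2) e_def by simp
  have ti: "hom C SY SX (Comp C i1 t)" using comp_hom cat t(1) i1h by metis
  have idSY: "hom C SY SY (Id C SY)" using id_hom cat oSY by metis
  have "Comp C s (Comp C i1 t) = t"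
    using assoc[OF cat t(1) i1h s(1)] s(2) id_l[OF cat t(1)] by simp
  hence "Comp C s (Comp C i1 t) = Comp C t (Id C SY)" using id_r[OF cat t(1)] by simp
  hence E2: "hom C SY P (pbpair C P pi1 pi2 (Comp C i1 t) (Id C SY))"
     "Comp C pi1 (pbpair C P pi1 pi2 (Comp C i1 t) (Id C SY)) = Comp C i1 t"
     "Comp C pi2 (pbpair C P pi1 pi2 (Comp C i1 t) (Id C SY)) = Id C SY"
    using pbpair_prop[OF PB] idSY ti ds dt by auto
  define e' where "e' = pbpair C P pi1 pi2 (Comp C i1 t) (Id C SY)"
  have c1: "Comp C cwx (Comp C i1 t) = cw0Y"
    using assoc[OF cat t(1) i1h cwx(1)] cwx(2) I2 by simp
  have c2: "Comp C cw0 (Comp C i1 t) = cw0Y"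
    using assoc[OF cat t(1) i1h cw0(1)] cw0(2) I2 by simp
  have ge': "hom C SY L (Comp C g e')" "Comp C l1 (Comp C g e') = cw0Y" "Comp C l2 (Comp C g e') = cw0Y"
    "Comp C l3 (Comp C g e') = cwy"
    using comp_hom[OF cat E2(1) G(1)] assoc[OF cat E2(1) G(1) ls(1)] assoc[OF cat E2(1) G(1) ls(2)]
      assoc[OF cat E2(1) G(1) ls(3)] G assoc[OF cat E2(1) pi(1) cwx(1)] assoc[OF cat E2(1) pi(1) cw0(1)]
      assoc[OF cat E2(1) pi(2) cwy(1)] E2 id_r[OF cat cwy(1)] c1 c2 e'_def by auto
  define hY where "hY = pbpair C KY r1 r2 cw0Y cwy"
  have HY: "hom C SY KY hY" "Comp C r1 hY = cw0Y" "Comp C r2 hY = cwy"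
    using pbpair_prop[OF KYp, of SY cw0Y cwy] cwy(1) cw0Y(1) dqy I4 hY_def by auto
  have T2: "hom C KY L (triple C L l1 l2 l3 r1 r1 r2)" "Comp C l1 (triple C L l1 l2 l3 r1 r1 r2) = r1"
     "Comp C l2 (triple C L l1 l2 l3 r1 r1 r2) = r1" "Comp C l3 (triple C L l1 l2 l3 r1 r1 r2) = r2"
    using triple_prop[OF A3, of KY r1 r1 r2] rs dqx by auto
  have "Comp C g e' = Comp C (triple C L l1 l2 l3 r1 r1 r2) hY"
  proof -
    have "triple C L l1 l2 l3 cw0Y cw0Y cwy = Comp C g e'"
      by (rule triple_unique[OF A3]) (use cwy cw0Y I4 ge' dqx in auto)
    moreover have "triple C L l1 l2 l3 cw0Y cw0Y cwy = Comp C (triple C L l1 l2 l3 r1 r1 r2) hY"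
      by (rule triple_unique[OF A3]) (use cwy cw0Y I4 dqx comp_hom[OF cat HY(1) T2(1)]
          assoc[OF cat HY(1) T2(1) ls(1)] assoc[OF cat HY(1) T2(1) ls(2)] assoc[OF cat HY(1) T2(1) ls(3)]
          T2 HY in auto)
    ultimately show ?thesis by simp
  qed
  hence M2: "Comp C (Comp C p g) e' = cwy"
    using assoc[OF cat E2(1) G(1) pg(1)] assoc[OF cat HY(1) T2(1) pg(1)] pg(3) HY(3) e'_def by simp
  show ?thesis
    unfolding internal_mult_def g_def[symmetric] dx dy dw
    using mh M1 M2 e_def e'_def s_def t_def cwx_def cwy_def by simp
qed

end
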